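(* Let $\mathscr{A}$ be a finite $\sigma$-structure and $k>0$. There is a bijective correspondence between $\mathbb{E}_k$-coalgebras $\alpha:\mathscr{A}\to\mathbb{E}_k\mathscr{A}$ and forest covers of the Gaifman graph $\mathcal{G}(\mathscr{A})$ of height $\le k$ (with universe $A$); under it, $\alpha$ corresponds to the order $a\le a'$ iff $\alpha(a)\sqsubseteq\alpha(a')$, and a forest cover corresponds to the map sending $a$ to the chain $[a_1,\dots,a_j]$ of its predecessors $a_1<\dots<a_j=a$.
   Context: $\mathbb{E}_k\mathscr{A}$: universe $A^{\le k}$ (non-empty sequences over $A$ of length $\le k$, ordered by prefix $\sqsubseteq$); $R(s_1,\dots,s_n)$ iff the $s_i$ are pairwise $\sqsubseteq$-comparable and $R^{\mathscr{A}}(\varepsilon s_1,\dots,\varepsilon s_n)$, where $\varepsilon[a_1,\dots,a_j]=a_j$. Comultiplication $\delta_{\mathscr{A}}[a_1,\dots,a_j]=[[a_1],[a_1,a_2],\dots,[a_1,\dots,a_j]]$; functor action on a homomorphism $h$: $\mathbb{E}_k h[a_1,\dots,a_j]=[h(a_1),\dots,h(a_j)]$. An $\mathbb{E}_k$-coalgebra on $\mathscr{A}$ is a homomorphism $\alpha:\mathscr{A}\to\mathbb{E}_k\mathscr{A}$ with $\delta_{\mathscr{A}}\circ\alpha=\mathbb{E}_k\alpha\circ\alpha$ and $\varepsilon_{\mathscr{A}}\circ\alpha=\mathrm{id}_A$. The Gaifman graph $\mathcal{G}(\mathscr{A})=(A,\frown)$: $a\frown a'$ iff $a\neq a'$ and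 both occur in some tuple of some relation $R^{\mathscr{A}}$. A forest is a poset in which the set of predecessors of each element is a finite chain; its height is the maximum size of a chain. A forest cover of a graph $(V,\frown)$ is a forest order $\le$ on $V$ such that $v\frown v'$ implies $v\le v'$ or $v'\le v$. *)

theory Defs
  imports "HOL-Library.Sublist" "HOL-Library.FuncSet"
begin

text \<open>A relational sigma-structure: signature given by an arity function
  ar on relation symbols of type 'r; a structure is a universe A and an
  interpretation I assigning to each relation symbol a set of tuples (lists).\<close>

definition sig_struct :: "('r \<Rightarrow> nat) \<Rightarrow> 'a set \<Rightarrow> ('r \<Rightarrow> 'a list set) \<Rightarrow> bool" where
  "sig_struct ar A I \<longleftrightarrow> (\<forall>R. \<forall>t\<in>I R. length t = ar R \<and> set t \<subseteq> A)"

definition is_hom :: "'a set \<Rightarrow> ('r \<Rightarrow> 'a list set) \<Rightarrow> 'b set \<Rightarrow> ('r \<Rightarrow> 'b list set) \<Rightarrow> ('a \<Rightarrow> 'b) \<Rightarrow> bool" where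
  "is_hom A I B J h \<longleftrightarrow> (\<forall>a\<in>A. h a \<in> B) \<and> (\<forall>R. \<forall>t\<in>I R. map h t \<in> J R)"

definition Ek_univ :: "nat \<Rightarrow> 'a set \<Rightarrow> 'a list set" where
  "Ek_univ k A = {s. s \<noteq> [] \<and> length s \<le> k \<and> set s \<subseteq> A}"

definition Ek_rel :: "nat \<Rightarrow> 'a set \<Rightarrow> ('r \<Rightarrow> 'a list set) \<Rightarrow> 'r \<Rightarrow> 'a list list set" where
  "Ek_rel k A I R = {ts. set ts \<subseteq> Ek_univ k A
      \<and> (\<forall>s\<in>set ts. \<forall>s'\<in>set ts. prefix s s' \<or> prefix s' s)
      \<and> map last ts \<in> I R}"

text \<open>Counit epsilon is last; comultiplication delta.\<close>
definition Ek_delta :: "'a list \<Rightarrow> 'a list list" where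
  "Ek_delta s = map (\<lambda>i. take i s) [1..<Suc (length s)]"

definition Ek_coalgebra :: "nat \<Rightarrow> 'a set \<Rightarrow> ('r \<Rightarrow> 'a list set) \<Rightarrow> ('a \<Rightarrow> 'a list) \<Rightarrow> bool" where
  "Ek_coalgebra k A I \<alpha> \<longleftrightarrow>
     is_hom A I (Ek_univ k A) (Ek_rel k A I) \<alpha>
     \<and> (\<forall>a\<in>A. Ek_delta (\<alpha> a) = map \<alpha> (\<alpha> a))
     \<and> (\<forall>a\<in>A. last (\<alpha> a) = a)"

definition gaifman_adj :: "('r \<Rightarrow> 'a list set) \<Rightarrow> 'a \<Rightarrow> 'a \<Rightarrow> bool" where
  "gaifman_adj I a a' \<longleftrightarrow> a \<noteq> a' \<and> (\<exists>R. \<exists>t\<in>I R. a \<in> set t \<and> a' \<in> set t)"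

definition is_chain :: "'a rel \<Rightarrow> 'a set \<Rightarrow> bool" where
  "is_chain le C \<longleftrightarrow> (\<forall>x\<in>C. \<forall>y\<in>C. (x, y) \<in> le \<or> (y, x) \<in> le)"

definition forest_order :: "'a set \<Rightarrow> 'a rel \<Rightarrow> bool" where
  "forest_order V le \<longleftrightarrow> le \<subseteq> V \<times> V \<and> refl_on V le \<and> antisym le \<and> trans le
     \<and> (\<forall>a\<in>V. finite {b. (b, a) \<in> le} \<and> is_chain le {b. (b, a) \<in> le})"

definition height_le :: "'a set \<Rightarrow> 'a rel \<Rightarrow> nat \<Rightarrow> bool" where
  "height_le V le k \<longleftrightarrow> (\<forall>C\<subseteq>V. is_chain le C \<longrightarrow> finite C \<and> card C \<le> k)"

definition forest_cover :: "'a set \<Rightarrow> ('a \<Rightarrow> 'a \<Rightarrow> bool) \<Rightarrow> 'a rel \<Rightarrow> bool" where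
  "forest_cover V adj le \<longleftrightarrow> forest_order V le
     \<and> (\<forall>v\<in>V. \<forall>v'\<in>V. adj v v' \<longrightarrow> (v, v') \<in> le \<or> (v', v) \<in> le)"

definition coalg_to_order :: "'a set \<Rightarrow> ('a \<Rightarrow> 'a list) \<Rightarrow> 'a rel" where
  "coalg_to_order A \<alpha> = {(a, a'). a \<in> A \<and> a' \<in> A \<and> prefix (\<alpha> a) (\<alpha> a')}"

definition pred_chain :: "'a rel \<Rightarrow> 'a \<Rightarrow> 'a list" where
  "pred_chain le a = (THE xs. set xs = {b. (b, a) \<in> le}
       \<and> sorted_wrt (\<lambda>x y. (x, y) \<in> le \<and> x \<noteq> y) xs)"

definition order_to_coalg :: "'a set \<Rightarrow> 'a rel \<Rightarrow> ('a \<Rightarrow> 'a list)" where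
  "order_to_coalg A le = restrict (pred_chain le) A"

end

theory Submission
  imports Defs
begin

lemma sorted_unique:
  assumes "set xs = set ys" "sorted_wrt R xs" "sorted_wrt R ys" "\<And>x y. R x y \<Longrightarrow> \<not> R y x"
  shows "xs = ys"
  using assms
proof (induction xs arbitrary: ys)
  case Nil thus ?case by simp
next
  case (Cons x xs)
  then obtain y ys' where ys: "ys = y # ys'" by (cases ys) auto
  have irr: "\<And>z. \<not> R z z" using Cons.prems(4) by blast
  have "x = y"
  proof (rule ccontr)
    assume "x \<noteq> y"
    hence "y \<in> set xs" "x \<in> set ys'" using Cons.prems(1) ys by (auto simp: set_eq_iff)
    hence "R x y" "R y x" using Cons.prems(2,3) ys by auto
    thus False using Cons.prems(4) by blast
  qed
  moreover have "x \<notin> set xs" using Cons.prems(2) irr by auto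
  moreover have "y \<notin> set ys'" using Cons.prems(3) ys irr by auto
  ultimately have "set xs = set ys'" using Cons.prems(1) ys by auto
  moreover have "sorted_wrt R xs" using Cons.prems(2) by simp
  moreover have "sorted_wrt R ys'" using Cons.prems(3) ys by simp
  ultimately have "xs = ys'" using Cons.IH[of ys'] Cons.prems(4) by blast
  then show ?case using ys \<open>x=y\<close> by simp
qed

lemma sorted_exists:
  assumes "finite S" "\<And>x y. x\<in>S \<Longrightarrow> y\<in>S \<Longrightarrow> x\<noteq>y \<Longrightarrow> R x y \<or> R y x"
   "\<And>x y z. x\<in>S \<Longrightarrow> y\<in>S \<Longrightarrow> z\<in>S \<Longrightarrow> R x y \<Longrightarrow> R y z \<Longrightarrow> R x z"
  shows "\<exists>xs. set xs = S \<and> sorted_wrt R xs"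
  using assms
proof (induction S rule: finite_induct)
  case empty show ?case by simp
next
  case (insert x F)
  have "\<exists>xs. set xs = F \<and> sorted_wrt R xs"
    apply (rule insert.IH)
    using insert.prems by blast+
  then obtain xs where xs: "set xs = F" "sorted_wrt R xs" by blast
  let ?ys = "filter (\<lambda>y. R y x) xs @ [x] @ filter (\<lambda>y. \<not> R y x) xs"
  have "set ?ys = insert x F" using xs by auto
  moreover have "sorted_wrt R ?ys"
  proof -
    have cross: "R y z" if "y \<in> set xs" "R y x" "z \<in> set xs" "\<not> R z x" for y z
    proof -
      have "z \<noteq> x" using that insert.hyps xs by auto
      hence "R x z" using insert.prems(1)[of z x] that xs by auto
      thus ?thesis using insert.prems(2)[of y x z] that xs by auto
    qed
    have "\<forall>z\<in>set xs. \<not> R z x \<longrightarrow> R x z"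
      using insert.prems(1) insert.hyps xs by auto
    then show ?thesis using xs cross
      by (auto simp: sorted_wrt_append sorted_wrt_filter)
  qed
  ultimately show ?case by blast
qed

lemma pc_props:
  assumes fo: "forest_order A le" and a: "a \<in> A"
  shows "set (pred_chain le a) = {b. (b,a)\<in>le} \<and> sorted_wrt (\<lambda>x y. (x,y)\<in>le \<and> x\<noteq>y) (pred_chain le a)"
    and "\<And>xs. set xs = {b. (b,a)\<in>le} \<Longrightarrow> sorted_wrt (\<lambda>x y. (x,y)\<in>le \<and> x\<noteq>y) xs \<Longrightarrow> pred_chain le a = xs"
proof -
  have fin: "finite {b. (b,a)\<in>le}" and ch: "is_chain le {b. (b,a)\<in>le}"
    using fo a unfolding forest_order_def by auto
  have tr: "trans le" and an: "antisym le" using fo unfolding forest_order_def by auto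
  have asy: "\<And>x y. (\<lambda>x y. (x,y)\<in>le \<and> x\<noteq>y) x y \<Longrightarrow> \<not> (\<lambda>x y. (x,y)\<in>le \<and> x\<noteq>y) y x"
    using an by (auto dest: antisymD)
  obtain xs where xs: "set xs = {b. (b,a)\<in>le}" "sorted_wrt (\<lambda>x y. (x,y)\<in>le \<and> x\<noteq>y) xs"
  proof -
    have "\<exists>xs. set xs = {b. (b,a)\<in>le} \<and> sorted_wrt (\<lambda>x y. (x,y)\<in>le \<and> x\<noteq>y) xs"
    proof (rule sorted_exists[OF fin])
      fix x y assume "x \<in> {b. (b,a)\<in>le}" "y \<in> {b. (b,a)\<in>le}" "x \<noteq> y"
      then show "((x,y)\<in>le \<and> x\<noteq>y) \<or> ((y,x)\<in>le \<and> y\<noteq>x)"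
        using ch unfolding is_chain_def by blast
    next
      fix x y z assume "(x,y)\<in>le \<and> x\<noteq>y" "(y,z)\<in>le \<and> y\<noteq>z"
      then show "(x,z)\<in>le \<and> x\<noteq>z"
        using tr an by (metis antisymD transD)
    qed
    then show ?thesis using that by blast
  qed
  have eq: "pred_chain le a = xs"
    unfolding pred_chain_def
    apply (rule the_equality)
    using xs apply blast
    apply (rule sorted_unique[symmetric, OF _ xs(2)])
    using xs asy by auto
  show "set (pred_chain le a) = {b. (b,a)\<in>le} \<and> sorted_wrt (\<lambda>x y. (x,y)\<in>le \<and> x\<noteq>y) (pred_chain le a)"
    using eq xs by simp
  fix ys assume "set ys = {b. (b,a)\<in>le}" "sorted_wrt (\<lambda>x y. (x,y)\<in>le \<and> x\<noteq>y) ys"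
  then show "pred_chain le a = ys" unfolding eq
    apply (intro sorted_unique[OF _ xs(2)])
    using xs asy by auto
qed

lemma prefix_len_eq: "prefix xs ys \<Longrightarrow> length ys \<le> length xs \<Longrightarrow> xs = ys"
  unfolding prefix_def by auto

lemma delta_nth: "i < length s \<Longrightarrow> Ek_delta s ! i = take (Suc i) s"
  unfolding Ek_delta_def by (simp del: upt_Suc)

lemma length_delta[simp]: "length (Ek_delta s) = length s"
  unfolding Ek_delta_def by (simp del: upt_Suc)

lemma C1:
  assumes "Ek_coalgebra k A I \<alpha>" "a \<in> A" "i < length (\<alpha> a)"
  shows "\<alpha> (\<alpha> a ! i) = take (Suc i) (\<alpha> a)"
proof -
  have "Ek_delta (\<alpha> a) = map \<alpha> (\<alpha> a)" using assms unfolding Ek_coalgebra_def by blast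
  hence "Ek_delta (\<alpha> a) ! i = map \<alpha> (\<alpha> a) ! i" by simp
  thus ?thesis using assms(3) by (simp add: delta_nth)
qed

lemma C2:
  assumes "Ek_coalgebra k A I \<alpha>" "a \<in> A"
  shows "\<alpha> a \<noteq> [] \<and> length (\<alpha> a) \<le> k \<and> set (\<alpha> a) \<subseteq> A \<and> last (\<alpha> a) = a"
  using assms unfolding Ek_coalgebra_def is_hom_def Ek_univ_def by auto

lemma C4:
  assumes "Ek_coalgebra k A I \<alpha>" "a \<in> A" "b \<in> A" "prefix (\<alpha> b) (\<alpha> a)"
  shows "b \<in> set (\<alpha> a)"
proof -
  have "b = last (\<alpha> b)" "\<alpha> b \<noteq> []" using C2[OF assms(1,3)] by auto
  hence "b \<in> set (\<alpha> b)" by (metis last_in_set)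
  thus ?thesis using set_mono_prefix[OF assms(4)] by blast
qed

lemma C5:
  assumes "Ek_coalgebra k A I \<alpha>" "a \<in> A" "b \<in> set (\<alpha> a)"
  shows "b \<in> A \<and> prefix (\<alpha> b) (\<alpha> a)"
proof -
  obtain i where i: "i < length (\<alpha> a)" "b = \<alpha> a ! i" using assms(3) by (auto simp: in_set_conv_nth)
  have "b \<in> A" using C2[OF assms(1,2)] assms(3) by blast
  moreover have "\<alpha> b = take (Suc i) (\<alpha> a)" using C1[OF assms(1,2) i(1)] i(2) by simp
  ultimately show ?thesis by (simp add: take_is_prefix)
qed

lemma C6:
  assumes "Ek_coalgebra k A I \<alpha>" "a \<in> A"
  shows "sorted_wrt (\<lambda>x y. (x,y) \<in> coalg_to_order A \<alpha> \<and> x \<noteq> y) (\<alpha> a)"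
  unfolding sorted_wrt_iff_nth_less
proof (intro allI impI)
  fix i j assume ij: "i < j" "j < length (\<alpha> a)"
  have ei: "\<alpha> (\<alpha> a ! i) = take (Suc i) (\<alpha> a)" using C1[OF assms] ij by simp
  have ej: "\<alpha> (\<alpha> a ! j) = take (Suc j) (\<alpha> a)" using C1[OF assms] ij by simp
  have inA: "\<alpha> a ! i \<in> A" "\<alpha> a ! j \<in> A" using C2[OF assms] ij by (auto intro!: nth_mem[THEN subsetD[rotated]])
  have "prefix (take (Suc i) (\<alpha> a)) (take (Suc j) (\<alpha> a))"
  proof -
    have "take (Suc i) (\<alpha> a) = take (Suc i) (take (Suc j) (\<alpha> a))" using ij by (simp add: min_def)
    thus ?thesis by (metis take_is_prefix)
  qed
  moreover have "\<alpha> a ! i \<noteq> \<alpha> a ! j"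
  proof
    assume "\<alpha> a ! i = \<alpha> a ! j"
    hence "length (take (Suc i) (\<alpha> a)) = length (take (Suc j) (\<alpha> a))" using ei ej by metis
    thus False using ij by simp
  qed
  ultimately show "(\<alpha> a ! i, \<alpha> a ! j) \<in> coalg_to_order A \<alpha> \<and> \<alpha> a ! i \<noteq> \<alpha> a ! j"
    unfolding coalg_to_order_def using inA ei ej by simp
qed

lemma C_preds:
  assumes "Ek_coalgebra k A I \<alpha>" "a \<in> A"
  shows "{b. (b,a) \<in> coalg_to_order A \<alpha>} = set (\<alpha> a)"
  using C4[OF assms(1,2)] C5[OF assms(1,2)] assms(2) unfolding coalg_to_order_def by auto

lemma C_forest:
  assumes co: "Ek_coalgebra k A I \<alpha>" and fin: "finite A"
  shows "forest_cover A (gaifman_adj I) (coalg_to_order A \<alpha>) \<and> height_le A (coalg_to_order A \<alpha>) k"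
proof -
  let ?le = "coalg_to_order A \<alpha>"
  have sub: "?le \<subseteq> A \<times> A" unfolding coalg_to_order_def by auto
  have refl: "refl_on A ?le" unfolding refl_on_def coalg_to_order_def by auto
  have anti: "antisym ?le"
  proof (rule antisymI)
    fix x y assume "(x,y) \<in> ?le" "(y,x) \<in> ?le"
    hence "x \<in> A" "y \<in> A" "\<alpha> x = \<alpha> y" unfolding coalg_to_order_def by (auto intro: prefix_order.antisym)
    thus "x = y" using C2[OF co] by metis
  qed
  have tr: "trans ?le" unfolding trans_def coalg_to_order_def by (auto intro: prefix_order.trans)
  have chain_a: "is_chain ?le {b. (b,a) \<in> ?le}" if "a \<in> A" for a
    unfolding C_preds[OF co that] is_chain_def
  proof (intro ballI)
    fix x y assume "x \<in> set (\<alpha> a)" "y \<in> set (\<alpha> a)"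
    hence "x \<in> A" "y \<in> A" "prefix (\<alpha> x) (\<alpha> a)" "prefix (\<alpha> y) (\<alpha> a)" using C5[OF co that] by auto
    thus "(x,y) \<in> ?le \<or> (y,x) \<in> ?le" unfolding coalg_to_order_def
      using prefix_same_cases by blast
  qed
  have fo: "forest_order A ?le" unfolding forest_order_def
    using sub refl anti tr chain_a C_preds[OF co] by simp
  have cov: "\<forall>v\<in>A. \<forall>v'\<in>A. gaifman_adj I v v' \<longrightarrow> (v, v') \<in> ?le \<or> (v', v) \<in> ?le"
  proof (intro ballI impI)
    fix v v' assume v: "v \<in> A" "v' \<in> A" "gaifman_adj I v v'"
    then obtain R t where t: "t \<in> I R" "v \<in> set t" "v' \<in> set t" unfolding gaifman_adj_def by blast
    have "map \<alpha> t \<in> Ek_rel k A I R" using co t(1) unfolding Ek_coalgebra_def is_hom_def by blast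
    hence "prefix (\<alpha> v) (\<alpha> v') \<or> prefix (\<alpha> v') (\<alpha> v)"
      unfolding Ek_rel_def using t by auto
    thus "(v, v') \<in> ?le \<or> (v', v) \<in> ?le" using v unfolding coalg_to_order_def by auto
  qed
  have ht: "height_le A ?le k" unfolding height_le_def
  proof (intro allI impI)
    fix C assume C: "C \<subseteq> A" "is_chain ?le C"
    have finC: "finite C" using C fin finite_subset by blast
    show "finite C \<and> card C \<le> k"
    proof (cases "C = {}")
      case True thus ?thesis by simp
    next
      case False
      have mC: "Max ((\<lambda>b. length (\<alpha> b)) ` C) \<in> (\<lambda>b. length (\<alpha> b)) ` C"
        using finC False by (intro Max_in) auto
      then obtain c where c1: "c \<in> C" "length (\<alpha> c) = Max ((\<lambda>b. length (\<alpha> b)) ` C)" by auto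
      have c: "c \<in> C" "\<forall>b\<in>C. length (\<alpha> b) \<le> length (\<alpha> c)"
        using c1 finC by auto
      have "C \<subseteq> set (\<alpha> c)"
      proof
        fix b assume b: "b \<in> C"
        have "prefix (\<alpha> b) (\<alpha> c)"
        proof -
          have "(b,c) \<in> ?le \<or> (c,b) \<in> ?le" using C(2) b c(1) unfolding is_chain_def by blast
          thus ?thesis unfolding coalg_to_order_def
            using c(2) b by (auto dest: prefix_len_eq)
        qed
        thus "b \<in> set (\<alpha> c)" using C4[OF co, of c b] b c C by blast
      qed
      hence "card C \<le> card (set (\<alpha> c))" by (simp add: card_mono)
      also have "\<dots> \<le> length (\<alpha> c)" by (rule card_length)
      also have "\<dots> \<le> k" using C2[OF co, of c] c C by blast
      finally show ?thesis using finC by simp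
    qed
  qed
  show ?thesis using fo cov ht unfolding forest_cover_def by simp
qed

lemma sorted_strict_distinct: "sorted_wrt (\<lambda>x y. (x,y)\<in>le \<and> x\<noteq>y) xs \<Longrightarrow> distinct xs"
  by (induction xs) auto

lemma D1:
  assumes fo: "forest_order A le" and ht: "height_le A le k" and a: "a \<in> A"
  shows "pred_chain le a \<noteq> [] \<and> length (pred_chain le a) \<le> k \<and> set (pred_chain le a) \<subseteq> A
         \<and> last (pred_chain le a) = a \<and> distinct (pred_chain le a)"
proof -
  let ?P = "pred_chain le a"
  have P: "set ?P = {b. (b,a)\<in>le}" "sorted_wrt (\<lambda>x y. (x,y)\<in>le \<and> x\<noteq>y) ?P"
    using pc_props(1)[OF fo a] by auto
  have sub: "le \<subseteq> A \<times> A" and rf: "refl_on A le" and an: "antisym le"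
    and ch: "is_chain le {b. (b,a)\<in>le}"
    using fo a unfolding forest_order_def by auto
  have aP: "a \<in> set ?P" using P rf a unfolding refl_on_def by auto
  have ne: "?P \<noteq> []" using aP by auto
  have dist: "distinct ?P" using P(2) by (rule sorted_strict_distinct)
  have sA: "set ?P \<subseteq> A" using P sub by auto
  have "card (set ?P) \<le> k" using ht sA ch P unfolding height_le_def by auto
  hence len: "length ?P \<le> k" using distinct_card[OF dist] by simp
  have last: "last ?P = a"
  proof (rule ccontr)
    assume nl: "last ?P \<noteq> a"
    have "?P = butlast ?P @ [last ?P]" using ne by simp
    hence "sorted_wrt (\<lambda>x y. (x,y)\<in>le \<and> x\<noteq>y) (butlast ?P @ [last ?P])" using P(2) by simp
    moreover have "a \<in> set (butlast ?P)" using aP nl ne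
      by (metis append_butlast_last_id butlast.simps(1) in_set_butlast_appendI rotate1.simps(2) set_rotate1 set_ConsD)
    ultimately have "(a, last ?P) \<in> le" by (auto simp: sorted_wrt_append)
    moreover have "(last ?P, a) \<in> le" using P(1) ne last_in_set by fastforce
    ultimately show False using an nl by (auto dest: antisymD)
  qed
  show ?thesis using ne len sA last dist by simp
qed

lemma D3:
  assumes fo: "forest_order A le" and ht: "height_le A le k" and a: "a \<in> A"
    and i: "i < length (pred_chain le a)"
  shows "pred_chain le (pred_chain le a ! i) = take (Suc i) (pred_chain le a)"
proof -
  let ?P = "pred_chain le a"
  let ?b = "?P ! i"
  have P: "set ?P = {b. (b,a)\<in>le}" "sorted_wrt (\<lambda>x y. (x,y)\<in>le \<and> x\<noteq>y) ?P"
    using pc_props(1)[OF fo a] by auto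
  note d1 = D1[OF fo ht a]
  have sub: "le \<subseteq> A \<times> A" and rf: "refl_on A le" and an: "antisym le" and tr: "trans le"
    using fo unfolding forest_order_def by auto
  have bA: "?b \<in> A" using d1 i nth_mem by blast
  have ba: "(?b, a) \<in> le" using P(1) i nth_mem by blast
  have "set (take (Suc i) ?P) = {c. (c, ?b) \<in> le}"
  proof
    show "set (take (Suc i) ?P) \<subseteq> {c. (c, ?b) \<in> le}"
    proof
      fix c assume "c \<in> set (take (Suc i) ?P)"
      then obtain j where j: "j < length (take (Suc i) ?P)" "c = take (Suc i) ?P ! j"
        by (auto simp: in_set_conv_nth)
      hence j2: "j \<le> i" "c = ?P ! j" using i by auto
      show "c \<in> {c. (c, ?b) \<in> le}"
      proof (cases "j = i")
        case True thus ?thesis using j2 bA rf unfolding refl_on_def by auto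
      next
        case False
        hence "j < i" using j2 by simp
        thus ?thesis using sorted_wrt_nth_less[OF P(2) _ i] j2 by auto
      qed
    qed
  next
    show "{c. (c, ?b) \<in> le} \<subseteq> set (take (Suc i) ?P)"
    proof
      fix c assume "c \<in> {c. (c, ?b) \<in> le}"
      hence cb: "(c, ?b) \<in> le" by simp
      hence "(c, a) \<in> le" using ba tr by (auto dest: transD)
      hence "c \<in> set ?P" using P by simp
      then obtain j where j: "j < length ?P" "c = ?P ! j" by (auto simp: in_set_conv_nth)
      have "j \<le> i"
      proof (rule ccontr)
        assume "\<not> j \<le> i"
        hence "i < j" by simp
        hence "(?b, c) \<in> le" "?b \<noteq> c" using sorted_wrt_nth_less[OF P(2) _ j(1)] j by auto
        thus False using cb an by (auto dest: antisymD)
      qed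
      thus "c \<in> set (take (Suc i) ?P)" using j i
        by (auto simp: in_set_conv_nth intro!: exI[of _ j])
    qed
  qed
  moreover have "sorted_wrt (\<lambda>x y. (x,y)\<in>le \<and> x\<noteq>y) (take (Suc i) ?P)"
    using P(2) by (rule sorted_wrt_take)
  ultimately show ?thesis using pc_props(2)[OF fo bA] by blast
qed

lemma D4:
  assumes fo: "forest_order A le" and ht: "height_le A le k" and x: "x \<in> A" and y: "y \<in> A"
  shows "prefix (pred_chain le x) (pred_chain le y) \<longleftrightarrow> (x,y) \<in> le"
proof
  assume "prefix (pred_chain le x) (pred_chain le y)"
  hence "set (pred_chain le x) \<subseteq> set (pred_chain le y)" by (rule set_mono_prefix)
  moreover have "x \<in> set (pred_chain le x)" using D1[OF fo ht x] by (metis last_in_set)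
  ultimately show "(x,y) \<in> le" using pc_props(1)[OF fo y] by auto
next
  assume "(x,y) \<in> le"
  hence "x \<in> set (pred_chain le y)" using pc_props(1)[OF fo y] by auto
  then obtain i where i: "i < length (pred_chain le y)" "x = pred_chain le y ! i"
    by (auto simp: in_set_conv_nth)
  show "prefix (pred_chain le x) (pred_chain le y)"
    using D3[OF fo ht y i(1)] i(2) by (simp add: take_is_prefix)
qed

lemma E:
  assumes sig: "sig_struct ar A I" and fc: "forest_cover A (gaifman_adj I) le" and ht: "height_le A le k"
  shows "order_to_coalg A le \<in> {\<alpha> \<in> extensional A. Ek_coalgebra k A I \<alpha>}
         \<and> coalg_to_order A (order_to_coalg A le) = le"
proof -
  have fo: "forest_order A le" using fc unfolding forest_cover_def by simp
  have sub: "le \<subseteq> A \<times> A" using fo unfolding forest_order_def by simp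
  let ?b = "order_to_coalg A le"
  have bA: "\<And>a. a \<in> A \<Longrightarrow> ?b a = pred_chain le a" unfolding order_to_coalg_def by simp
  have pre: "prefix (?b x) (?b y) \<longleftrightarrow> (x,y) \<in> le" if x: "x \<in> A" and y: "y \<in> A" for x y
    unfolding bA[OF x] bA[OF y] by (rule D4[OF fo ht x y])
  have univ: "?b a \<in> Ek_univ k A" if a: "a \<in> A" for a
    using D1[OF fo ht a] unfolding bA[OF a] Ek_univ_def by simp
  have lst: "last (?b a) = a" if a: "a \<in> A" for a using D1[OF fo ht a] unfolding bA[OF a] by simp
  have hom: "is_hom A I (Ek_univ k A) (Ek_rel k A I) ?b"
    unfolding is_hom_def
  proof (intro conjI ballI allI)
    fix a assume "a \<in> A" thus "?b a \<in> Ek_univ k A" by (rule univ)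
  next
    fix R t assume t: "t \<in> I R"
    have tA: "set t \<subseteq> A" using sig t unfolding sig_struct_def by blast
    have "set (map ?b t) \<subseteq> Ek_univ k A" using tA univ by auto
    moreover have "\<forall>s\<in>set (map ?b t). \<forall>s'\<in>set (map ?b t). prefix s s' \<or> prefix s' s"
    proof (intro ballI)
      fix s s' assume "s \<in> set (map ?b t)" "s' \<in> set (map ?b t)"
      then obtain x y where xy: "x \<in> set t" "y \<in> set t" "s = ?b x" "s' = ?b y" by auto
      show "prefix s s' \<or> prefix s' s"
      proof (cases "x = y")
        case True thus ?thesis using xy by simp
      next
        case False
        hence "gaifman_adj I x y" unfolding gaifman_adj_def using xy t by blast
        hence "(x,y) \<in> le \<or> (y,x) \<in> le" using fc xy tA unfolding forest_cover_def by blast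
        moreover have "x \<in> A" "y \<in> A" using xy tA by auto
        ultimately show ?thesis using pre[of x y] pre[of y x] xy(3,4) by blast
      qed
    qed
    moreover have "map last (map ?b t) = t"
    proof -
      have "map last (map ?b t) = map id t" unfolding map_map
        by (rule map_cong) (use tA lst in auto)
      thus ?thesis by simp
    qed
    ultimately show "map ?b t \<in> Ek_rel k A I R" unfolding Ek_rel_def using t by simp
  qed
  have delta: "\<forall>a\<in>A. Ek_delta (?b a) = map ?b (?b a)"
  proof
    fix a assume a: "a \<in> A"
    show "Ek_delta (?b a) = map ?b (?b a)"
    proof (rule nth_equalityI)
      show "length (Ek_delta (?b a)) = length (map ?b (?b a))" by simp
    next
      fix i assume "i < length (Ek_delta (?b a))"
      hence i: "i < length (pred_chain le a)" using bA a by simp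
      have inA: "pred_chain le a ! i \<in> A" using D1[OF fo ht a] i nth_mem by blast
      show "Ek_delta (?b a) ! i = map ?b (?b a) ! i"
        using delta_nth[of i "pred_chain le a"] i D3[OF fo ht a i] bA[OF a] bA[OF inA] by simp
    qed
  qed
  have co: "Ek_coalgebra k A I ?b" unfolding Ek_coalgebra_def using hom delta lst by simp
  have ext: "?b \<in> extensional A" unfolding order_to_coalg_def by simp
  have "coalg_to_order A ?b = {(x,y). x \<in> A \<and> y \<in> A \<and> (x,y) \<in> le}"
    unfolding coalg_to_order_def using pre by blast
  also have "\<dots> = le" using sub by blast
  finally have "coalg_to_order A ?b = le" .
  thus ?thesis using co ext by simp
qed

lemma F:
  assumes exA: "\<alpha> \<in> extensional A" and co: "Ek_coalgebra k A I \<alpha>" and fin: "finite A"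
  shows "order_to_coalg A (coalg_to_order A \<alpha>) = \<alpha>"
proof (rule ext)
  fix a
  show "order_to_coalg A (coalg_to_order A \<alpha>) a = \<alpha> a"
  proof (cases "a \<in> A")
    case False
    have "\<alpha> a = undefined" by (rule extensional_arb[OF exA False])
    thus ?thesis using False unfolding order_to_coalg_def by simp
  next
    case True
    have fo: "forest_order A (coalg_to_order A \<alpha>)"
      using C_forest[OF co fin] unfolding forest_cover_def by simp
    have "pred_chain (coalg_to_order A \<alpha>) a = \<alpha> a"
      by (rule pc_props(2)[OF fo True C_preds[OF co True, symmetric] C6[OF co True]])
    thus ?thesis using True unfolding order_to_coalg_def by simp
  qed
qed

theorem mainTheorem11:
  fixes ar :: "'r \<Rightarrow> nat" and A :: "'a set" and I :: "'r \<Rightarrow> 'a list set" and k :: nat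
  assumes "sig_struct ar A I" and "finite A" and "0 < k"
  shows "bij_betw (coalg_to_order A)
            {\<alpha> \<in> extensional A. Ek_coalgebra k A I \<alpha>}
            {le. forest_cover A (gaifman_adj I) le \<and> height_le A le k}
       \<and> (\<forall>le. forest_cover A (gaifman_adj I) le \<and> height_le A le k \<longrightarrow>
              order_to_coalg A le \<in> {\<alpha> \<in> extensional A. Ek_coalgebra k A I \<alpha>}
              \<and> coalg_to_order A (order_to_coalg A le) = le)"
proof -
  let ?X = "{\<alpha> \<in> extensional A. Ek_coalgebra k A I \<alpha>}"
  let ?Y = "{le. forest_cover A (gaifman_adj I) le \<and> height_le A le k}"
  have part2: "\<forall>le. forest_cover A (gaifman_adj I) le \<and> height_le A le k \<longrightarrow>
              order_to_coalg A le \<in> ?X \<and> coalg_to_order A (order_to_coalg A le) = le"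
    using E[OF assms(1)] by blast
  have "bij_betw (coalg_to_order A) ?X ?Y"
    unfolding bij_betw_def
  proof
    show "inj_on (coalg_to_order A) ?X"
    proof (rule inj_onI)
      fix a b assume ab: "a \<in> ?X" "b \<in> ?X" "coalg_to_order A a = coalg_to_order A b"
      have fa: "order_to_coalg A (coalg_to_order A a) = a"
        using ab(1) by (intro F[OF _ _ assms(2)]) auto
      have fb: "order_to_coalg A (coalg_to_order A b) = b"
        using ab(2) by (intro F[OF _ _ assms(2)]) auto
      show "a = b" using fa fb ab(3) by metis
    qed
  next
    show "coalg_to_order A ` ?X = ?Y"
    proof
      show "coalg_to_order A ` ?X \<subseteq> ?Y" using C_forest[OF _ assms(2)] by auto
    next
      show "?Y \<subseteq> coalg_to_order A ` ?X"
      proof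
        fix le assume "le \<in> ?Y"
        hence "order_to_coalg A le \<in> ?X" "coalg_to_order A (order_to_coalg A le) = le"
          using part2 by auto
        thus "le \<in> coalg_to_order A ` ?X" by (metis image_eqI)
      qed
    qed
  qed
  thus ?thesis using part2 by blast
qed


end
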